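(* Let $Q_2 = \{m^2 : m \in \mathbb{N}\}$, $Q_3 = \{m^3 : m \in \mathbb{N}\}$, and for integers $a \geq 2$ and $i \in \{0,\ldots,a-1\}$ let $\mathbb{M}_{a,i} = \{n \in \mathbb{N} : n \bmod a = i\}$. Then: (a) $\mathrm{cnum}(F) < \mathrm{cnum}(\mathbb{S})$ for every finite $F \subseteq \mathbb{N}$; (b) $\mathrm{cnum}(Q_3) < \mathrm{cnum}(\mathbb{S}) < \mathrm{cnum}(\mathbb{N})$; (c) $\mathrm{cnum}(\mathbb{S})$ and $\mathrm{cnum}(Q_2)$ are incomparable: neither $\mathrm{cnum}(\mathbb{S}) \leq \mathrm{cnum}(Q_2)$ nor $\mathrm{cnum}(Q_2) \leq \mathrm{cnum}(\mathbb{S})$; (d) for every $a \geq 2$ and $i \in \{0,\ldots,a-1\}$, $\mathrm{cnum}(\mathbb{S})$ and $\mathrm{cnum}(\mathbb{M}_{a,i})$ are incomparable in the same sense. In particular the order $\leq$ on $\mathcal{S}/\mathcal{F}$ is not total on the c-numerosities of subsets of $\mathbb{N}$.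
   Context: $\mathbb{N} = \{1,2,3,\ldots\}$; for $S \subseteq \mathbb{N}$, $f_n(S) = |S \cap \{1,\ldots,n\}|$. The set $\mathbb{S}$ is defined by: $n \in \mathbb{S}$ iff $n \geq 2$ and $\lceil \log_2(\log_2 n)\rceil$ is odd (equivalently, the union of the intervals $\{m : 2^{(2^{k-1})} < m \leq 2^{(2^k)}\}$ over odd $k\geq 1$). $\mathcal{S}/\mathcal{F}$ is the set of sequences of non-negative integers modulo $(x_n)\sim(y_n)$ iff $x_n=y_n$ for all but finitely many $n$, with $[x] \leq [y]$ iff $x_n \leq y_n$ for all but finitely many $n$, and $[x] < [y]$ iff $x_n < y_n$ for all but finitely many $n$. $\mathrm{cnum}(S) = [(f_n(S))_n]$. *)

theory Defs
  imports Complex_Main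
begin

definition Npos :: "nat set" where "Npos = {n. n \<ge> 1}"

definition fcount :: "nat \<Rightarrow> nat set \<Rightarrow> nat" where
  "fcount n S = card (S \<inter> {1..n})"

text \<open>Representative sequence of the c-numerosity cnum(S).\<close>
definition cnum :: "nat set \<Rightarrow> (nat \<Rightarrow> nat)" where
  "cnum S = (\<lambda>n. fcount n S)"

text \<open>Order on S/F, on representatives: eventually (for all but finitely many n).\<close>
definition sf_le :: "(nat \<Rightarrow> nat) \<Rightarrow> (nat \<Rightarrow> nat) \<Rightarrow> bool" where
  "sf_le x y \<longleftrightarrow> (\<forall>\<^sub>F n in sequentially. x n \<le> y n)"

definition sf_less :: "(nat \<Rightarrow> nat) \<Rightarrow> (nat \<Rightarrow> nat) \<Rightarrow> bool" where
  "sf_less x y \<longleftrightarrow> (\<forall>\<^sub>F n in sequentially. x n < y n)"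

definition Sset :: "nat set" where
  "Sset = {n. n \<ge> 2 \<and> odd \<lceil>log 2 (log 2 (real n))\<rceil>}"

definition Q2 :: "nat set" where "Q2 = {m^2 | m. m \<ge> 1}"
definition Q3 :: "nat set" where "Q3 = {m^3 | m. m \<ge> 1}"

definition Mset :: "nat \<Rightarrow> nat \<Rightarrow> nat set" where
  "Mset a i = {n. n \<ge> 1 \<and> n mod a = i}"

end

theory Submission imports Defs begin

definition T :: "nat \<Rightarrow> nat" where "T j = 2^(2^j)"

lemma T_Suc: "T (Suc j) = (T j)^2"
  by (simp add: T_def power_mult[symmetric] mult.commute)

lemma T_gt: "j < T j"
proof -
  have "j < 2^j" by (rule less_exp)
  also have "2^j < (2::nat)^(2^j)" by (rule less_exp)
  finally show ?thesis by (simp add: T_def)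
qed

lemma T_ge2: "T j \<ge> 2"
  unfolding T_def using one_less_power[of "2::nat" "2^j"] by simp

lemma T_mono: "i \<le> j \<Longrightarrow> T i \<le> T j"
  unfolding T_def by (simp add: power_increasing)

lemma S_mem:
  assumes "T j < n" "n \<le> T (Suc j)"
  shows "n \<in> Sset \<longleftrightarrow> even j"
proof -
  have n2: "n \<ge> 2" using T_ge2[of j] assms by linarith
  have pw: "(2::real) powr (2 powr real k) = 2 ^ (2 ^ k)" for k
  proof -
    have "(2::real) powr real k = real (2^k)" by (simp add: powr_realpow)
    then have "(2::real) powr (2 powr real k) = 2 powr real (2^k)" by simp
    also have "\<dots> = 2 ^ (2^k)" by (rule powr_realpow) simp
    finally show ?thesis .
  qed
  have a: "real (T j) = 2 powr (2 powr real j)"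
    using pw[of j] by (simp add: T_def)
  have b: "real (T (Suc j)) = 2 powr (2 powr real (j+1))"
    using pw[of "j+1"] by (simp add: T_def)
  have l1: "2 powr real j < log 2 (real n)"
    using assms(1) a by (subst less_log_iff) auto
  have l2: "log 2 (real n) \<le> 2 powr real (j+1)"
    using assms(2) b n2 by (subst log_le_iff) auto
  have pos: "0 < log 2 (real n)" using n2 by simp
  have "\<lceil>log 2 (log 2 (real n))\<rceil> = int j + 1"
    using ceiling_log_eq_powr_iff[OF pos, of 2 j] l1 l2 by simp
  then show ?thesis using n2 unfolding Sset_def by simp
qed

lemma one_notin: "1 \<notin> Sset" and two_notin: "2 \<notin> Sset"
  unfolding Sset_def by auto

lemma pow_inj: "inj_on (\<lambda>x::nat. x ^ k) A" if "k > 0"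
proof (rule inj_onI)
  fix x y :: nat assume "x^k = y^k"
  then show "x = y" using that by (metis power_eq_imp_eq_base zero_le)
qed

lemma int_lower:
  assumes "\<And>x. a < x \<Longrightarrow> x \<le> b \<Longrightarrow> x \<in> S" "b \<le> n"
  shows "b - a \<le> card (S \<inter> {1..n})"
proof -
  have "{a<..b} \<subseteq> S \<inter> {1..n}" using assms by auto
  then have "card {a<..b} \<le> card (S \<inter> {1..n})" by (intro card_mono) auto
  then show ?thesis by simp
qed

lemma int2_lower:
  assumes "\<And>x. a1 < x \<Longrightarrow> x \<le> b1 \<Longrightarrow> x \<in> S"
    "\<And>x. a2 < x \<Longrightarrow> x \<le> n \<Longrightarrow> x \<in> S" "b1 \<le> a2" "b1 \<le> n"
  shows "(b1 - a1) + (n - a2) \<le> card (S \<inter> {1..n})"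
proof -
  have "{a1<..b1} \<union> {a2<..n} \<subseteq> S \<inter> {1..n}" using assms by auto
  then have "card ({a1<..b1} \<union> {a2<..n}) \<le> card (S \<inter> {1..n})" by (intro card_mono) auto
  moreover have "card ({a1<..b1} \<union> {a2<..n}) = card {a1<..b1} + card {a2<..n}"
    using assms(3) by (intro card_Un_disjoint) auto
  ultimately show ?thesis by simp
qed

lemma S_in: "even j \<Longrightarrow> T j < x \<Longrightarrow> x \<le> T (Suc j) \<Longrightarrow> x \<in> Sset"
  using S_mem by blast
lemma S_out: "odd j \<Longrightarrow> T j < x \<Longrightarrow> x \<le> T (Suc j) \<Longrightarrow> x \<notin> Sset"
  using S_mem by blast

lemma S_upper:
  assumes "odd j"
  shows "card (Sset \<inter> {1..T (Suc j)}) \<le> T j - 2"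
proof -
  have "Sset \<inter> {1..T (Suc j)} \<subseteq> {3..T j}"
  proof
    fix x assume x: "x \<in> Sset \<inter> {1..T (Suc j)}"
    then have "x \<noteq> 1" "x \<noteq> 2" using one_notin two_notin by auto
    moreover have "x \<le> T j" using S_out[OF assms, of x] x by force
    ultimately show "x \<in> {3..T j}" using x by auto
  qed
  then have "card (Sset \<inter> {1..T (Suc j)}) \<le> card {3..T j}" by (intro card_mono) auto
  then show ?thesis by simp
qed

lemma S_lower_end:
  assumes "even j"
  shows "T (Suc j) - T j \<le> card (Sset \<inter> {1..T (Suc j)})"
  using int_lower[of "T j" "T (Suc j)" Sset "T (Suc j)"] S_in[OF assms] by auto

lemma T4: "T (Suc (Suc i)) = (T i)^4"
  by (simp add: T_Suc power_mult[symmetric])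

lemma S_lower:
  assumes "n > 256"
  shows "\<exists>m\<ge>4. m^2 - m + (n - m^4) \<le> card (Sset \<inter> {1..n})"
proof -
  define k where "k = (LEAST k. n \<le> T k)"
  have ex: "n \<le> T n" using T_gt[of n] by simp
  have k1: "n \<le> T k" unfolding k_def by (rule LeastI[of _ n], rule ex)
  have k2: "\<And>k'. k' < k \<Longrightarrow> \<not> n \<le> T k'" unfolding k_def by (rule not_less_Least)
  have T0: "T 0 = 2" by (simp add: T_def)
  have T3: "T 3 = 256" by (simp add: T_def)
  have "k \<noteq> 0" using k1 T0 assms by (cases k) auto
  then obtain j where kj: "k = Suc j" by (cases k) auto
  have lo: "T j < n" using k2[of j] kj by simp
  have hi: "n \<le> T (Suc j)" using k1 kj by simp
  have j3: "j \<ge> 3"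
  proof (rule ccontr)
    assume "\<not> 3 \<le> j"
    then have "T (Suc j) \<le> T 3" by (intro T_mono) auto
    then show False using hi assms T3 by simp
  qed
  show ?thesis
  proof (cases "even j")
    case False
    then obtain i where ji: "j = Suc i" by (cases j) auto
    have ie: "even i" using False ji by simp
    have m4: "T i \<ge> 4" using T_mono[of 2 i] j3 ji by (simp add: T_def)
    have "T j - T i \<le> card (Sset \<inter> {1..n})"
      using int_lower[of "T i" "T j" Sset n] S_in[OF ie] ji lo by auto
    moreover have "n - (T i)^4 = 0" using hi ji T4[of i] by simp
    moreover have "T j = (T i)^2" using ji T_Suc by simp
    ultimately show ?thesis using m4 by (intro exI[of _ "T i"]) auto
  next
    case True
    define i where "i = j - 2"
    have ji: "j = Suc (Suc i)" using j3 by (simp add: i_def)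
    have i2: "i \<ge> 2" using j3 True unfolding i_def by presburger
    have ie: "even i" using True ji by simp
    have m4: "T i \<ge> 4" using T_mono[OF i2] by (simp add: T_def)
    have "(T (Suc i) - T i) + (n - T j) \<le> card (Sset \<inter> {1..n})"
      using int2_lower[of "T i" "T (Suc i)" Sset "T j" n] S_in[OF ie] S_in[OF True] hi lo
        T_mono[of "Suc i" j] ji by auto
    moreover have "T j = (T i)^4" using ji T4 by simp
    moreover have "T (Suc i) = (T i)^2" using T_Suc by simp
    ultimately show ?thesis using m4 by (intro exI[of _ "T i"]) auto
  qed
qed

lemma cube_arith:
  fixes m d x :: nat
  assumes m: "m \<ge> 4" and x: "x^3 \<le> m^4 + d"
  shows "x < m^2 - m + d"
proof (rule ccontr)
  assume "\<not> x < m^2 - m + d"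
  then have xg: "m^2 - m + d \<le> x" by simp
  define q where "q = m - 1"
  have mq: "m = q + 1" "q \<ge> 3" using m by (auto simp: q_def)
  have y: "m^2 - m = m * q" using mq by (simp add: power2_eq_square algebra_simps)
  have "3 * 3 \<le> q * q" using mq(2) by (intro mult_mono) auto
  then have "3 * 3 * q \<le> q * q * q" by (intro mult_right_mono) auto
  moreover have "q^3 = q*q*q" by (simp add: power3_eq_cube)
  ultimately have q3: "m < q^3" using mq by linarith
  have "m^4 = m^3 * m" by (simp add: power_Suc2 numeral_eq_Suc)
  also have "\<dots> < m^3 * q^3" using q3 m by simp
  also have "\<dots> = (m^2 - m)^3" using y by (simp add: power_mult_distrib)
  finally have A: "m^4 < (m^2 - m)^3" .
  define y' where "y' = m^2 - m"
  have "(y' + d)^3 = y'^3 + d^3 + 3*y'*d*(y'+d)" by (simp add: power3_eq_cube algebra_simps)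
  then have "y'^3 + d^3 \<le> (y'+d)^3" by simp
  moreover have "d \<le> d^3"
  proof (cases "d = 0")
    case False
    then show ?thesis using power_increasing[of 1 3 d] by simp
  qed simp
  ultimately have B: "y'^3 + d \<le> (y'+d)^3" by simp
  have C: "(y'+d)^3 \<le> x^3" using xg y'_def by (intro power_mono) auto
  have A': "m^4 < y'^3" using A y'_def by simp
  show False using A' B C x by linarith
qed

lemma Q3_less:
  assumes "n > 256"
  shows "card (Q3 \<inter> {1..n}) < card (Sset \<inter> {1..n})"
proof -
  obtain m where m: "m \<ge> 4" and g: "m^2 - m + (n - m^4) \<le> card (Sset \<inter> {1..n})"
    using S_lower[OF assms] by blast
  define B where "B = m^2 - m + (n - m^4)"
  have "Q3 \<inter> {1..n} \<subseteq> (\<lambda>x. x^3) ` {1..<B}"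
  proof
    fix y assume y: "y \<in> Q3 \<inter> {1..n}"
    then obtain x where x: "y = x^3" "x \<ge> 1" unfolding Q3_def by auto
    have "x^3 \<le> m^4 + (n - m^4)" using y x by auto
    then have "x < B" unfolding B_def by (rule cube_arith[OF m])
    then show "y \<in> (\<lambda>x. x^3) ` {1..<B}" using x by auto
  qed
  then have "card (Q3 \<inter> {1..n}) \<le> card ((\<lambda>x. x^3) ` {1..<B})" by (intro card_mono) auto
  also have "\<dots> \<le> card {1..<B}" by (rule card_image_le) auto
  also have "\<dots> < B"
  proof -
    have "4 * m \<le> m * m" using m by (intro mult_right_mono) auto
    moreover have "m^2 = m*m" by (simp add: power2_eq_square)
    ultimately have "m^2 - m \<ge> 1" using m by linarith
    then show ?thesis unfolding B_def by simp
  qed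
  finally show ?thesis using g B_def by simp
qed

lemma pow_lower:
  assumes "k > 0" "c^k \<le> n" and "\<And>x. x \<ge> 1 \<Longrightarrow> x^k \<in> Q"
  shows "c \<le> card (Q \<inter> {1..n})"
proof -
  have "(\<lambda>x. x^k) ` {1..c} \<subseteq> Q \<inter> {1..n}"
  proof
    fix y assume "y \<in> (\<lambda>x. x^k) ` {1..c}"
    then obtain x where x: "y = x^k" "1 \<le> x" "x \<le> c" by auto
    have "x^k \<le> c^k" using x by (intro power_mono) auto
    then have "x^k \<le> n" using assms(2) by linarith
    moreover have "1 \<le> x^k" using x by simp
    moreover have "x^k \<in> Q" using x assms(3) by simp
    ultimately show "y \<in> Q \<inter> {1..n}" using x(1) by simp
  qed
  then have "card ((\<lambda>x. x^k) ` {1..c}) \<le> card (Q \<inter> {1..n})" by (intro card_mono) auto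
  moreover have "card ((\<lambda>x. x^k) ` {1..c}) = c"
    using pow_inj[OF assms(1)] by (subst card_image) auto
  ultimately show ?thesis by simp
qed

lemma Q2_upper: "card (Q2 \<inter> {1..M^2}) \<le> M"
proof -
  have "Q2 \<inter> {1..M^2} \<subseteq> (\<lambda>x. x^2) ` {1..M}"
  proof
    fix y assume y: "y \<in> Q2 \<inter> {1..M^2}"
    then obtain x where x: "y = x^2" "x \<ge> 1" unfolding Q2_def by auto
    have "x \<le> M" using y x power2_le_imp_le[of x M] by auto
    then show "y \<in> (\<lambda>x. x^2) ` {1..M}" using x by auto
  qed
  then have "card (Q2 \<inter> {1..M^2}) \<le> card ((\<lambda>x. x^2) ` {1..M})" by (intro card_mono) auto
  also have "\<dots> \<le> card {1..M}" by (rule card_image_le) auto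
  finally show ?thesis by simp
qed

lemma M_upper:
  assumes "a > 0"
  shows "card (Mset a i \<inter> {1..n}) \<le> n div a + 1"
proof -
  have "inj_on (\<lambda>x. x div a) (Mset a i \<inter> {1..n})"
  proof (rule inj_onI)
    fix x y assume "x \<in> Mset a i \<inter> {1..n}" "y \<in> Mset a i \<inter> {1..n}" "x div a = y div a"
    then have h: "x mod a = i" "y mod a = i" "x div a = y div a" unfolding Mset_def by auto
    have "x = (x div a)*a + x mod a" by simp
    also have "\<dots> = (y div a)*a + y mod a" using h by simp
    also have "\<dots> = y" by simp
    finally show "x = y" .
  qed
  moreover have "(\<lambda>x. x div a) ` (Mset a i \<inter> {1..n}) \<subseteq> {0..n div a}"
    by (auto intro: div_le_mono)
  ultimately have "card (Mset a i \<inter> {1..n}) \<le> card {0..n div a}"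
    by (intro card_inj_on_le) auto
  then show ?thesis by simp
qed

lemma M_lower:
  assumes "a \<ge> 2" "i < a"
  shows "n div a - 1 \<le> card (Mset a i \<inter> {1..n})"
proof -
  have "inj_on (\<lambda>q. q*a + i) {1..<n div a}" using assms by (auto intro!: inj_onI)
  moreover have "(\<lambda>q. q*a + i) ` {1..<n div a} \<subseteq> Mset a i \<inter> {1..n}"
  proof
    fix y assume "y \<in> (\<lambda>q. q*a + i) ` {1..<n div a}"
    then obtain q where q0: "q \<in> {1..<n div a}" "y = q*a + i" by blast
    then have q: "y = q*a + i" "1 \<le> q" "q < n div a" by auto
    have "q*a + i < q*a + a" using assms by simp
    also have "\<dots> = (q+1)*a" by simp
    also have "\<dots> \<le> (n div a) * a" using q by (intro mult_right_mono) auto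
    also have "\<dots> \<le> n" by simp
    finally have "y \<le> n" using q by simp
    moreover have "y mod a = i" using q assms by simp
    moreover have "y \<ge> 1" using q assms by (simp add: Suc_le_eq)
    ultimately show "y \<in> Mset a i \<inter> {1..n}" unfolding Mset_def by auto
  qed
  ultimately have "card {1..<n div a} \<le> card (Mset a i \<inter> {1..n})"
    by (intro card_inj_on_le) auto
  then show ?thesis by simp
qed

lemma Q3_mem: "x \<ge> 1 \<Longrightarrow> x^3 \<in> Q3" unfolding Q3_def by auto
lemma Q2_mem: "x \<ge> 1 \<Longrightarrow> x^2 \<in> Q2" unfolding Q2_def by auto

lemma partA:
  assumes "finite F"
  shows "sf_less (cnum F) (cnum Sset)"
  unfolding sf_less_def cnum_def fcount_def eventually_sequentially
proof (intro exI allI impI)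
  fix n assume n: "257 + (card F)^3 \<le> n"
  have "card (F \<inter> {1..n}) \<le> card F" using assms by (intro card_mono) auto
  also have "\<dots> \<le> card (Q3 \<inter> {1..n})" using n by (intro pow_lower[of 3 "card F" n Q3] Q3_mem) auto
  also have "\<dots> < card (Sset \<inter> {1..n})" using n by (intro Q3_less) auto
  finally show "card (F \<inter> {1..n}) < card (Sset \<inter> {1..n})" .
qed

lemma partB1: "sf_less (cnum Q3) (cnum Sset)"
  unfolding sf_less_def cnum_def fcount_def eventually_sequentially
  by (intro exI[of _ 257] allI impI Q3_less) auto

lemma partB2: "sf_less (cnum Sset) (cnum Npos)"
  unfolding sf_less_def cnum_def fcount_def eventually_sequentially
proof (intro exI[of _ 1] allI impI)
  fix n :: nat assume n: "1 \<le> n"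
  have "Sset \<inter> {1..n} \<subseteq> {2..n}"
  proof
    fix x assume x: "x \<in> Sset \<inter> {1..n}"
    then have "x \<noteq> 1" using one_notin by auto
    then show "x \<in> {2..n}" using x by auto
  qed
  then have "card (Sset \<inter> {1..n}) \<le> card {2..n}" by (intro card_mono) auto
  moreover have "Npos \<inter> {1..n} = {1..n}" by (auto simp: Npos_def)
  ultimately show "card (Sset \<inter> {1..n}) < card (Npos \<inter> {1..n})" using n by simp
qed

lemma Tbig: "T j \<ge> 16" if "j \<ge> 2" using T_mono[OF that] by (simp add: T_def)

lemma freq:
  fixes P :: "nat \<Rightarrow> bool"
  assumes "\<And>N. \<exists>n\<ge>N. \<not> P n"
  shows "\<not> (\<forall>\<^sub>F n in sequentially. P n)"
  unfolding eventually_sequentially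
proof
  assume "\<exists>N. \<forall>n\<ge>N. P n"
  then obtain N where "\<forall>n\<ge>N. P n" by blast
  moreover obtain n where "n \<ge> N" "\<not> P n" using assms by blast
  ultimately show False by blast
qed

lemma partC1: "\<not> sf_le (cnum Sset) (cnum Q2)"
  unfolding sf_le_def cnum_def fcount_def
proof (rule freq)
  fix N :: nat
  define j where "j = 2*N+2"
  define M where "M = T j"
  have ev: "even j" by (simp add: j_def)
  have M16: "M \<ge> 16" using Tbig[of j] by (simp add: M_def j_def)
  have nM: "T (Suc j) = M^2" by (simp add: M_def T_Suc)
  have nN: "T (Suc j) \<ge> N" using T_gt[of "Suc j"] by (simp add: j_def)
  have g: "M^2 - M \<le> card (Sset \<inter> {1..T (Suc j)})" using S_lower_end[OF ev] nM M_def by simp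
  have q: "card (Q2 \<inter> {1..T (Suc j)}) \<le> M" using Q2_upper[of M] nM by simp
  have "4 * M \<le> M * M" using M16 by (intro mult_right_mono) auto
  moreover have "M^2 = M*M" by (simp add: power2_eq_square)
  ultimately have "\<not> card (Sset \<inter> {1..T (Suc j)}) \<le> card (Q2 \<inter> {1..T (Suc j)})"
    using g q M16 by linarith
  then show "\<exists>n\<ge>N. \<not> card (Sset \<inter> {1..n}) \<le> card (Q2 \<inter> {1..n})" using nN by blast
qed

lemma partC2: "\<not> sf_le (cnum Q2) (cnum Sset)"
  unfolding sf_le_def cnum_def fcount_def
proof (rule freq)
  fix N :: nat
  define j where "j = 2*N+1"
  define M where "M = T j"
  have od: "odd j" by (simp add: j_def)
  have nM: "T (Suc j) = M^2" by (simp add: M_def T_Suc)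
  have nN: "T (Suc j) \<ge> N" using T_gt[of "Suc j"] by (simp add: j_def)
  have M2: "M \<ge> 2" using T_ge2 by (simp add: M_def)
  have g: "card (Sset \<inter> {1..T (Suc j)}) \<le> M - 2" using S_upper[OF od] M_def by simp
  have q: "M \<le> card (Q2 \<inter> {1..T (Suc j)})" using nM by (intro pow_lower[of 2 M] Q2_mem) auto
  have "\<not> card (Q2 \<inter> {1..T (Suc j)}) \<le> card (Sset \<inter> {1..T (Suc j)})"
    using g q M2 by linarith
  then show "\<exists>n\<ge>N. \<not> card (Q2 \<inter> {1..n}) \<le> card (Sset \<inter> {1..n})" using nN by blast
qed

lemma partD1:
  assumes a: "a \<ge> 2" "i < a"
  shows "\<not> sf_le (cnum Sset) (cnum (Mset a i))"
  unfolding sf_le_def cnum_def fcount_def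
proof (rule freq)
  fix N :: nat
  define j where "j = 2*N+2"
  define M where "M = T j"
  have ev: "even j" by (simp add: j_def)
  have M16: "M \<ge> 16" using Tbig[of j] by (simp add: M_def j_def)
  have nM: "T (Suc j) = M^2" by (simp add: M_def T_Suc)
  have nN: "T (Suc j) \<ge> N" using T_gt[of "Suc j"] by (simp add: j_def)
  have g: "M^2 - M \<le> card (Sset \<inter> {1..T (Suc j)})" using S_lower_end[OF ev] nM M_def by simp
  have h: "card (Mset a i \<inter> {1..T (Suc j)}) \<le> M^2 div a + 1" using M_upper[of a i] nM a by simp
  have "M^2 div a \<le> M^2 div 2" using a by (intro div_le_mono2) auto
  moreover have "2 * (M^2 div 2) \<le> M^2" by simp
  moreover have "4 * M \<le> M * M" using M16 by (intro mult_right_mono) auto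
  moreover have "M^2 = M*M" by (simp add: power2_eq_square)
  ultimately have "\<not> card (Sset \<inter> {1..T (Suc j)}) \<le> card (Mset a i \<inter> {1..T (Suc j)})"
    using g h M16 by linarith
  then show "\<exists>n\<ge>N. \<not> card (Sset \<inter> {1..n}) \<le> card (Mset a i \<inter> {1..n})" using nN by blast
qed

lemma partD2:
  assumes a: "a \<ge> 2" "i < a"
  shows "\<not> sf_le (cnum (Mset a i)) (cnum Sset)"
  unfolding sf_le_def cnum_def fcount_def
proof (rule freq)
  fix N :: nat
  define j where "j = 2*(N+a)+1"
  define M where "M = T j"
  have od: "odd j" by (simp add: j_def)
  have nM: "T (Suc j) = M^2" by (simp add: M_def T_Suc)
  have nN: "T (Suc j) \<ge> N" using T_gt[of "Suc j"] by (simp add: j_def)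
  have M2: "M \<ge> 2" using T_ge2 by (simp add: M_def)
  have Ma: "M \<ge> a" using T_gt[of j] by (simp add: M_def j_def)
  have g: "card (Sset \<inter> {1..T (Suc j)}) \<le> M - 2" using S_upper[OF od] M_def by simp
  have h: "M^2 div a - 1 \<le> card (Mset a i \<inter> {1..T (Suc j)})" using M_lower[OF a] nM by simp
  have "M * a \<le> M * M" using Ma by (intro mult_left_mono) auto
  then have "M \<le> M^2 div a" using a by (subst less_eq_div_iff_mult_less_eq) (auto simp: power2_eq_square)
  then have "\<not> card (Mset a i \<inter> {1..T (Suc j)}) \<le> card (Sset \<inter> {1..T (Suc j)})"
    using g h M2 by linarith
  then show "\<exists>n\<ge>N. \<not> card (Mset a i \<inter> {1..n}) \<le> card (Sset \<inter> {1..n})" using nN by blast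
qed

theorem mainTheorem9:
  shows "(\<forall>F. finite F \<and> F \<subseteq> Npos \<longrightarrow> sf_less (cnum F) (cnum Sset))
    \<and> (sf_less (cnum Q3) (cnum Sset) \<and> sf_less (cnum Sset) (cnum Npos))
    \<and> (\<not> sf_le (cnum Sset) (cnum Q2) \<and> \<not> sf_le (cnum Q2) (cnum Sset))
    \<and> (\<forall>a i. a \<ge> 2 \<and> i < a \<longrightarrow>
         \<not> sf_le (cnum Sset) (cnum (Mset a i)) \<and> \<not> sf_le (cnum (Mset a i)) (cnum Sset))"
  using partA partB1 partB2 partC1 partC2 partD1 partD2 by blast

end
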